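(* Let $r\in[n]$ and $\mu>0$ with $n\ge\mu r$. There is a universal constant $C>0$ such that for all sufficiently large $n$ and every $\delta$ with $\sqrt{4/(n-1)}<\delta<\sqrt{\mu r/n}$, $$\log\mathcal{M}(\mathbb{K}_{r,\mu},d_{2,\infty},\delta)\le C\,\frac{r^2}{\delta^2}\log n.$$
   Context: $\mathbb{K}_{r,\mu}=\{\boldsymbol{U}\in\mathbb{R}^{n\times r}:\boldsymbol{U}^\top\boldsymbol{U}=\boldsymbol{I}_r,\ \|\boldsymbol{U}\|_{2,\infty}\le\sqrt{r\mu/n}\}$, where $\|\cdot\|_{2,\infty}$ is the maximum row Euclidean norm. $d_{2,\infty}(\boldsymbol{U}_1,\boldsymbol{U}_2)=\min_{\boldsymbol{\Gamma}\in\mathbb{O}_r}\|\boldsymbol{U}_2-\boldsymbol{U}_1\boldsymbol{\Gamma}\|_{2,\infty}$. $\mathcal{M}(\mathbb{K},\rho,\delta)$ is the $\delta$-packing number: the largest cardinality of a subset of $\mathbb{K}$ whose distinct elements are at $\rho$-distance greater than $\delta$. *)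

theory Defs
  imports Complex_Main "HOL-Library.Extended_Nat" "Jordan_Normal_Form.Matrix"
begin

definition norm_2inf :: "real mat \<Rightarrow> real" where
  "norm_2inf U = Max ((\<lambda>i. sqrt (\<Sum>j<dim_col U. (U $$ (i, j))^2)) ` {..<dim_row U})"

definition Kset :: "nat \<Rightarrow> nat \<Rightarrow> real \<Rightarrow> real mat set" where
  "Kset n r \<mu> = {U. U \<in> carrier_mat n r \<and> transpose_mat U * U = 1\<^sub>m r
                    \<and> norm_2inf U \<le> sqrt (real r * \<mu> / real n)}"

definition orth_group :: "nat \<Rightarrow> real mat set" where
  "orth_group r = {G. G \<in> carrier_mat r r \<and> transpose_mat G * G = 1\<^sub>m r}"

definition d_2inf :: "nat \<Rightarrow> real mat \<Rightarrow> real mat \<Rightarrow> real" where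
  "d_2inf r U1 U2 = Inf ((\<lambda>G. norm_2inf (U2 - U1 * G)) ` orth_group r)"

definition packing_number :: "'a set \<Rightarrow> ('a \<Rightarrow> 'a \<Rightarrow> real) \<Rightarrow> real \<Rightarrow> enat" where
  "packing_number K \<rho> \<delta> = Sup {enat (card S) | S. S \<subseteq> K \<and> finite S \<and>
      (\<forall>x\<in>S. \<forall>y\<in>S. x \<noteq> y \<longrightarrow> \<rho> x y > \<delta>)}"

end

theory Submission
  imports Defs "HOL-Analysis.L2_Norm" "HOL-Library.FuncSet"
begin

lemma round_err:
  assumes "n > 0"
  shows "\<bar>x - real_of_int (round (real n * x)) / real n\<bar> \<le> 1 / (2 * real n)"
proof -
  have h: "\<bar>real_of_int (round (real n * x)) - real n * x\<bar> \<le> 1/2"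
    by (rule of_int_round_abs_le)
  have "x - real_of_int (round (real n * x)) / real n
        = - (real_of_int (round (real n * x)) - real n * x) / real n"
    using assms by (simp add: field_simps)
  hence "\<bar>x - real_of_int (round (real n * x)) / real n\<bar>
        = \<bar>real_of_int (round (real n * x)) - real n * x\<bar> / real n"
    using assms by simp
  also have "\<dots> \<le> (1/2) / real n" using h assms by (intro divide_right_mono) auto
  finally show ?thesis by simp
qed

lemma round_bound:
  assumes "\<bar>x\<bar> \<le> 1"
  shows "\<bar>round (real n * x)\<bar> \<le> int n"
proof -
  have h: "\<bar>real_of_int (round (real n * x)) - real n * x\<bar> \<le> 1/2"
    by (rule of_int_round_abs_le)
  have "\<bar>real n * x\<bar> \<le> real n" using assms
    by (simp add: abs_mult mult_left_le)
  hence "\<bar>real_of_int (round (real n * x))\<bar> < real n + 1" using h by linarith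
  hence "\<bar>round (real n * x)\<bar> < int n + 1" by linarith
  thus ?thesis by simp
qed

lemma norm_2inf_nonneg:
  assumes "dim_row A > 0"
  shows "norm_2inf A \<ge> 0"
proof -
  have "sqrt (\<Sum>j<dim_col A. (A $$ (0, j))^2) \<le> norm_2inf A"
    unfolding norm_2inf_def using assms by (intro Max_ge) auto
  moreover have "sqrt (\<Sum>j<dim_col A. (A $$ (0, j))^2) \<ge> 0" by (simp add: sum_nonneg)
  ultimately show ?thesis by linarith
qed

lemma norm_2inf_le:
  assumes "dim_row A > 0" "\<And>i. i < dim_row A \<Longrightarrow> sqrt (\<Sum>j<dim_col A. (A $$ (i, j))^2) \<le> d"
  shows "norm_2inf A \<le> d"
  unfolding norm_2inf_def using assms by (subst Max_le_iff) auto

lemma d_2inf_le: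
  assumes "U \<in> carrier_mat n r" "n > 0"
  shows "d_2inf r U V \<le> norm_2inf (V - U)"
proof -
  have G: "1\<^sub>m r \<in> orth_group r" unfolding orth_group_def by simp
  have eq: "V - U * 1\<^sub>m r = V - U" using assms by simp
  have "bdd_below ((\<lambda>G. norm_2inf (V - U * G)) ` orth_group r)"
    using assms by (intro bdd_belowI[of _ 0]) (auto intro!: norm_2inf_nonneg)
  hence "d_2inf r U V \<le> norm_2inf (V - U * 1\<^sub>m r)"
    unfolding d_2inf_def using G by (intro cInf_lower) auto
  thus ?thesis using eq by simp
qed

lemma col_sum:
  assumes "U \<in> Kset n r \<mu>" "j < r"
  shows "(\<Sum>i<n. (U $$ (i, j))^2) = 1"
proof -
  have U: "U \<in> carrier_mat n r" "transpose_mat U * U = 1\<^sub>m r"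
    using assms unfolding Kset_def by auto
  have "(transpose_mat U * U) $$ (j, j) = 1" using U assms by simp
  moreover have "(transpose_mat U * U) $$ (j, j) = (\<Sum>i<n. (U $$ (i, j))^2)"
    using U(1) assms(2) by (simp add: scalar_prod_def power2_eq_square atLeast0LessThan)
  ultimately show ?thesis by simp
qed

lemma entry_bound:
  assumes "U \<in> Kset n r \<mu>" "i < n" "j < r"
  shows "\<bar>U $$ (i, j)\<bar> \<le> 1"
proof -
  have "(U $$ (i, j))^2 \<le> (\<Sum>i<n. (U $$ (i, j))^2)"
    using assms by (intro member_le_sum) auto
  hence "(U $$ (i, j))^2 \<le> 1" using col_sum[OF assms(1,3)] by simp
  thus ?thesis by (simp add: abs_square_le_1)
qed


lemma L2_close:
  assumes n: "n > 0" and del: "sqrt (real r) / real n \<le> \<delta>"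
    and U: "U \<in> Kset n r \<mu>" and i: "i < n"
  shows "L2_set (\<lambda>j. U $$ (i, j) - real_of_int (if i < n \<and> j < r \<and> \<delta>/2 \<le> L2_set (\<lambda>j. U $$ (i,j)) {..<r}
              then round (real n * U $$ (i,j)) else 0) / real n) {..<r} \<le> \<delta>/2"
proof (cases "\<delta>/2 \<le> L2_set (\<lambda>j. U $$ (i,j)) {..<r}")
  case True
  have "L2_set (\<lambda>j. U $$ (i, j) - real_of_int (if i < n \<and> j < r \<and> \<delta>/2 \<le> L2_set (\<lambda>j. U $$ (i,j)) {..<r}
              then round (real n * U $$ (i,j)) else 0) / real n) {..<r}
      = L2_set (\<lambda>j. \<bar>U $$ (i, j) - real_of_int (round (real n * U $$ (i,j))) / real n\<bar>) {..<r}"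
    using True i unfolding L2_set_def by (intro arg_cong[where f=sqrt] sum.cong) auto
  also have "\<dots> \<le> L2_set (\<lambda>j. 1 / (2 * real n)) {..<r}"
    using n by (intro L2_set_mono round_err) auto
  also have "\<dots> = sqrt (real r) / (2 * real n)" by (simp add: L2_set_constant)
  also have "\<dots> \<le> \<delta>/2" using del by simp
  finally show ?thesis .
next
  case False
  have "L2_set (\<lambda>j. U $$ (i, j) - real_of_int (if i < n \<and> j < r \<and> \<delta>/2 \<le> L2_set (\<lambda>j. U $$ (i,j)) {..<r}
              then round (real n * U $$ (i,j)) else 0) / real n) {..<r}
      = L2_set (\<lambda>j. U $$ (i, j)) {..<r}"
    using False by (intro L2_set_cong) auto
  thus ?thesis using False by simp
qed


lemma main16:
  assumes n3: "n \<ge> 3" and r1: "1 \<le> r" "r \<le> n"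
   and dl: "sqrt (4 / (real n - 1)) < \<delta>"
  shows "packing_number (Kset n r \<mu>) (d_2inf r) \<delta> \<noteq> \<infinity> \<and>
       ln (real (the_enat (packing_number (Kset n r \<mu>) (d_2inf r) \<delta>)))
         \<le> 16 * real r ^ 2 / \<delta> ^ 2 * ln (real n)"
proof -
  have npos: "n > 0" using n3 by simp
  have n1: "real n - 1 > 0" using n3 by simp
  have "0 \<le> sqrt (4 / (real n - 1))" using n1 by simp
  hence dpos: "\<delta> > 0" using dl by linarith
  have d2: "4 / (real n - 1) < \<delta>^2"
  proof -
    have "4 / (real n - 1) = (sqrt (4 / (real n - 1)))^2" using n1 by simp
    also have "\<dots> < \<delta>^2" using dl n1 by (intro power_strict_mono) auto
    finally show ?thesis .
  qed
  have del: "sqrt (real r) / real n \<le> \<delta>"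
  proof -
    have "(sqrt (real r) / real n)^2 = real r / (real n)^2" by (simp add: power_divide)
    also have "\<dots> \<le> real n / (real n)^2" using r1 by (intro divide_right_mono) auto
    also have "\<dots> = 1 / real n" using npos by (simp add: power2_eq_square)
    also have "\<dots> < 4 / (real n - 1)" using n1 n3 by (simp add: field_simps)
    also have "\<dots> < \<delta>^2" by (rule d2)
    finally have "(sqrt (real r) / real n)^2 < \<delta>^2" .
    hence "sqrt (real r) / real n < \<delta>" using dpos by (meson power_less_imp_less_base less_le)
    thus ?thesis by simp
  qed
  define K where "K = Kset n r \<mu>"
  define rn where "rn U i = L2_set (\<lambda>j. U $$ (i,j)) {..<r}" for U :: "real mat" and i
  define q where "q U = (\<lambda>(i,j). if i < n \<and> j < r \<and> \<delta>/2 \<le> rn U i then round (real n * U $$ (i,j)) else (0::int))" for U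
  define m where "m = nat \<lfloor>4 * real r / \<delta>^2\<rfloor>"
  define T where "T = (PiE {..<m} (\<lambda>_. {..n})) \<times> (PiE {..<m} (\<lambda>_. PiE {..<r} (\<lambda>_. {-int n..int n})))"
  define F where "F = (\<lambda>(idx::nat\<Rightarrow>nat, vals::nat\<Rightarrow>nat\<Rightarrow>int). \<lambda>(i::nat,j::nat).
      if i<n \<and> j<r \<and> (\<exists>l<m. idx l = i) then vals (LEAST l. l<m \<and> idx l = i) j else 0)"
  define B where "B = card T"

  have close: "L2_set (\<lambda>j. V$$(i,j) - U$$(i,j)) {..<r} \<le> \<delta>"
    if U: "U\<in>K" and V: "V\<in>K" and qe: "q U = q V" and i: "i<n" for U V i
  proof -
    define w where "w j = real_of_int (q U (i,j)) / real n" for j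
    have wV: "w j = real_of_int (q V (i,j))/real n" for j unfolding w_def qe ..
    have a: "L2_set (\<lambda>j. V$$(i,j) - w j) {..<r} \<le> \<delta>/2"
      using L2_close[OF npos del V[unfolded K_def] i] unfolding wV q_def rn_def by simp
    have b: "L2_set (\<lambda>j. U$$(i,j) - w j) {..<r} \<le> \<delta>/2"
      using L2_close[OF npos del U[unfolded K_def] i] unfolding w_def q_def rn_def by simp
    have b': "L2_set (\<lambda>j. w j - U$$(i,j)) {..<r} = L2_set (\<lambda>j. U$$(i,j) - w j) {..<r}"
      unfolding L2_set_def by (simp add: power2_commute)
    have "L2_set (\<lambda>j. V$$(i,j) - U$$(i,j)) {..<r} = L2_set (\<lambda>j. (V$$(i,j) - w j) + (w j - U$$(i,j))) {..<r}"
      by simp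
    also have "\<dots> \<le> L2_set (\<lambda>j. V$$(i,j) - w j) {..<r} + L2_set (\<lambda>j. w j - U$$(i,j)) {..<r}"
      by (rule L2_set_triangle_ineq)
    finally show ?thesis using a b b' by linarith
  qed

  have dle: "d_2inf r U V \<le> \<delta>" if U: "U\<in>K" and V: "V\<in>K" and qe: "q U = q V" for U V
  proof -
    have Uc: "U \<in> carrier_mat n r" and Vc: "V \<in> carrier_mat n r" using U V unfolding K_def Kset_def by auto
    have "d_2inf r U V \<le> norm_2inf (V - U)" by (rule d_2inf_le[OF Uc npos])
    also have "\<dots> \<le> \<delta>"
    proof (rule norm_2inf_le)
      show "dim_row (V - U) > 0" using Uc npos by simp
      fix i assume "i < dim_row (V - U)"
      hence i: "i < n" using Uc by simp
      have "sqrt (\<Sum>j<dim_col (V - U). ((V - U) $$ (i, j))\<^sup>2) = L2_set (\<lambda>j. V$$(i,j) - U$$(i,j)) {..<r}"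
        unfolding L2_set_def using Uc i by (intro arg_cong[where f=sqrt] sum.cong) auto
      also have "\<dots> \<le> \<delta>" by (rule close[OF U V qe i])
      finally show "sqrt (\<Sum>j<dim_col (V - U). ((V - U) $$ (i, j))\<^sup>2) \<le> \<delta>" .
    qed
    finally show ?thesis .
  qed
  have qbound: "q U (i,j) \<in> {-int n..int n}" if U: "U \<in> K" for U i j
  proof (cases "i < n \<and> j < r \<and> \<delta>/2 \<le> rn U i")
    case True
    have "\<bar>round (real n * U $$ (i,j))\<bar> \<le> int n"
      using True entry_bound[OF U[unfolded K_def]] by (intro round_bound) auto
    thus ?thesis using True unfolding q_def by auto
  qed (auto simp: q_def)

  have cardL: "card {i. i<n \<and> \<delta>/2 \<le> rn U i} \<le> m" if U: "U \<in> K" for U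
  proof -
    define L where "L = {i. i<n \<and> \<delta>/2 \<le> rn U i}"
    have Lsub: "L \<subseteq> {..<n}" unfolding L_def by auto
    have "(\<delta>/2)^2 * real (card L) = (\<Sum>i\<in>L. (\<delta>/2)^2)" by simp
    also have "\<dots> \<le> (\<Sum>i\<in>L. (rn U i)^2)"
      using dpos by (intro sum_mono power_mono) (auto simp: L_def)
    also have "\<dots> \<le> (\<Sum>i<n. (rn U i)^2)"
      using Lsub by (intro sum_mono2) auto
    also have "\<dots> = (\<Sum>i<n. \<Sum>j<r. (U $$ (i,j))^2)"
      unfolding rn_def L2_set_def by (intro sum.cong) (auto simp: sum_nonneg)
    also have "\<dots> = (\<Sum>j<r. \<Sum>i<n. (U $$ (i,j))^2)" by (rule sum.swap)
    also have "\<dots> = (\<Sum>j<r. 1)" using col_sum[OF U[unfolded K_def]] by simp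
    also have "\<dots> = real r" by simp
    finally have "(\<delta>/2)^2 * real (card L) \<le> real r" .
    hence "real (card L) \<le> 4 * real r / \<delta>^2" using dpos
      by (simp add: field_simps power2_eq_square)
    hence "card L \<le> m" unfolding m_def by (rule le_nat_floor)
    thus ?thesis unfolding L_def .
  qed

  have qK: "q U \<in> F ` T" if U: "U \<in> K" for U
  proof -
    define L where "L = {i. i<n \<and> \<delta>/2 \<le> rn U i}"
    have finL: "finite L" unfolding L_def by auto
    have cL: "card L \<le> m" unfolding L_def by (rule cardL[OF U])
    obtain g where g: "bij_betw g {0..<card L} L" using ex_bij_betw_nat_finite[OF finL] by blast
    define idx where "idx = restrict (\<lambda>l. if l < card L then g l else n) {..<m}"
    define vals where "vals = restrict (\<lambda>l. restrict (\<lambda>j. q U (idx l, j)) {..<r}) {..<m}"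
    have gL: "g l \<in> L" if "l < card L" for l using g that by (auto simp: bij_betw_def)
    have i1: "idx \<in> PiE {..<m} (\<lambda>_. {..n})"
      unfolding idx_def restrict_PiE_iff
    proof
      fix l assume "l \<in> {..<m}"
      show "(if l < card L then g l else n) \<in> {..n}"
        using gL[of l] by (auto simp: L_def)
    qed
    have i2: "vals \<in> PiE {..<m} (\<lambda>_. PiE {..<r} (\<lambda>_. {-int n..int n}))"
      unfolding vals_def restrict_PiE_iff using qbound[OF U] by blast
    have mem: "(idx, vals) \<in> T"
      unfolding T_def using i1 i2 by blast
    have Fq: "F (idx, vals) = q U"
    proof (rule ext)
      fix x :: "nat \<times> nat"
      obtain i j where x: "x = (i, j)" by (cases x)
      have Fij: "F (idx, vals) (i, j) = (if i<n \<and> j<r \<and> (\<exists>l<m. idx l = i)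
          then vals (LEAST l. l<m \<and> idx l = i) j else 0)"
        unfolding F_def by (simp only: case_prod_conv)
      have "F (idx, vals) (i, j) = q U (i, j)"
      proof (cases "i<n \<and> j<r \<and> (\<exists>l<m. idx l = i)")
        case True
        define l0 where "l0 = (LEAST l. l<m \<and> idx l = i)"
        have ex: "\<exists>l. l<m \<and> idx l = i" using True by blast
        have l0: "l0 < m \<and> idx l0 = i" unfolding l0_def by (rule LeastI_ex[OF ex])
        have "F (idx, vals) (i, j) = vals l0 j" unfolding Fij l0_def by (rule if_P[OF True])
        also have "\<dots> = q U (idx l0, j)"
        proof -
          have "l0 \<in> {..<m}" "j \<in> {..<r}" using l0 True by auto
          thus ?thesis unfolding vals_def by (simp only: restrict_apply')
        qed
        also have "\<dots> = q U (i, j)" using l0 by simp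
        finally show ?thesis .
      next
        case False
        have "q U (i, j) = 0"
        proof (cases "i < n \<and> j < r")
          case True
          have "i \<notin> L"
          proof
            assume "i \<in> L"
            moreover have "g ` {0..<card L} = L" using g by (simp add: bij_betw_def)
            ultimately obtain l where l: "l < card L" "g l = i"
              by (metis atLeastLessThan_iff imageE)
            hence "l < m" "idx l = i" using cL by (auto simp: idx_def)
            thus False using False True by blast
          qed
          thus ?thesis using True unfolding q_def L_def by auto
        next
          case False
          thus ?thesis unfolding q_def by auto
        qed
        thus ?thesis unfolding Fij if_not_P[OF False] by simp
      qed
      thus "F (idx, vals) x = q U x" using x by simp
    qed
    show ?thesis using rev_image_eqI[of "(idx, vals)" T "q U" F] Fq mem by simp
  qed

  have finT: "finite T" unfolding T_def by (intro finite_cartesian_product finite_PiE) auto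
  have BT: "B = (n+1)^m * (2*n+1)^(r*m)"
  proof -
    have "card {-int n..int n} = 2*n+1" by simp
    thus ?thesis unfolding B_def T_def
      by (simp add: card_cartesian_product card_PiE power_mult)
  qed

  have card_bound: "card S \<le> B"
    if S: "S \<subseteq> K" "finite S" "\<forall>x\<in>S. \<forall>y\<in>S. x \<noteq> y \<longrightarrow> d_2inf r x y > \<delta>" for S
  proof -
    have inj: "inj_on q S"
    proof (rule inj_onI, rule ccontr)
      fix x y assume "x \<in> S" "y \<in> S" "q x = q y" "x \<noteq> y"
      thus False using S dle[of x y] by fastforce
    qed
    have "card S = card (q ` S)" using inj by (simp add: card_image)
    also have "\<dots> \<le> card (F ` T)" using S qK finT by (intro card_mono) auto
    also have "\<dots> \<le> card T" using finT by (rule card_image_le)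
    finally show ?thesis unfolding B_def .
  qed

  have P: "packing_number K (d_2inf r) \<delta> \<le> enat B"
    unfolding packing_number_def by (rule Sup_least) (auto intro: card_bound)
  then obtain k where Pk: "packing_number K (d_2inf r) \<delta> = enat k" "k \<le> B"
    by (cases "packing_number K (d_2inf r) \<delta>") auto
  have Bpos: "B \<ge> 1" unfolding BT by simp
  have lnk: "ln (real k) \<le> ln (real B)"
    using Pk Bpos by (cases "k = 0") auto
  have lnB: "ln (real B) = real m * ln (real n + 1) + real (r*m) * ln (2 * real n + 1)"
    unfolding BT by (simp add: ln_mult ln_realpow add_pos_pos add.commute)
  have lnn: "0 \<le> ln (real n)" using npos by simp
  have l1: "ln (real n + 1) \<le> 2 * ln (real n)"
  proof -
    have "real n * 3 \<le> real n * real n" using n3 by (intro mult_left_mono) auto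
    moreover have "real n \<ge> 3" using n3 by simp
    ultimately have "real n + 1 \<le> (real n)^2" unfolding power2_eq_square by linarith
    hence "ln (real n + 1) \<le> ln ((real n)^2)" using npos by simp
    thus ?thesis using npos by (simp add: ln_realpow)
  qed
  have l2: "ln (2 * real n + 1) \<le> 2 * ln (real n)"
  proof -
    have "real n * 3 \<le> real n * real n" using n3 by (intro mult_left_mono) auto
    moreover have "real n \<ge> 3" using n3 by simp
    ultimately have "2 * real n + 1 \<le> (real n)^2" unfolding power2_eq_square by linarith
    hence "ln (2 * real n + 1) \<le> ln ((real n)^2)" using npos by simp
    thus ?thesis using npos by (simp add: ln_realpow)
  qed
  have mle: "real m \<le> 4 * real r / \<delta>^2" unfolding m_def
    using dpos by simp
  have "ln (real B) \<le> real m * (2 * ln (real n)) + real (r*m) * (2 * ln (real n))"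
    unfolding lnB using l1 l2 by (intro add_mono mult_left_mono) auto
  also have "\<dots> = 2 * (1 + real r) * real m * ln (real n)" by (simp add: algebra_simps)
  also have "\<dots> \<le> 4 * real r * real m * ln (real n)"
    using r1 lnn by (intro mult_right_mono) auto
  also have "\<dots> \<le> 4 * real r * (4 * real r / \<delta>^2) * ln (real n)"
    using lnn mle by (intro mult_right_mono mult_left_mono) auto
  also have "\<dots> = 16 * real r ^ 2 / \<delta> ^ 2 * ln (real n)" by (simp add: power2_eq_square)
  finally have "ln (real B) \<le> 16 * real r ^ 2 / \<delta> ^ 2 * ln (real n)" .
  thus ?thesis using Pk lnk unfolding K_def by simp
qed

theorem lemma16:
  shows "\<exists>C>0. \<exists>N::nat. \<forall>n\<ge>N. \<forall>r \<mu> \<delta>.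
     1 \<le> r \<and> r \<le> n \<and> \<mu> > 0 \<and> real n \<ge> \<mu> * real r \<and>
     sqrt (4 / (real n - 1)) < \<delta> \<and> \<delta> < sqrt (\<mu> * real r / real n) \<longrightarrow>
       packing_number (Kset n r \<mu>) (d_2inf r) \<delta> \<noteq> \<infinity> \<and>
       ln (real (the_enat (packing_number (Kset n r \<mu>) (d_2inf r) \<delta>)))
         \<le> C * real r ^ 2 / \<delta> ^ 2 * ln (real n)"
proof -
  have "\<forall>n\<ge>3. \<forall>r \<mu> \<delta>.
     1 \<le> r \<and> r \<le> n \<and> \<mu> > 0 \<and> real n \<ge> \<mu> * real r \<and>
     sqrt (4 / (real n - 1)) < \<delta> \<and> \<delta> < sqrt (\<mu> * real r / real n) \<longrightarrow>
       packing_number (Kset n r \<mu>) (d_2inf r) \<delta> \<noteq> \<infinity> \<and>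
       ln (real (the_enat (packing_number (Kset n r \<mu>) (d_2inf r) \<delta>)))
         \<le> 16 * real r ^ 2 / \<delta> ^ 2 * ln (real n)"
    using main16 by blast
  thus ?thesis by (intro exI[of _ "16::real"]) auto
qed

end
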